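(* Let $p$ be an odd prime, $q=p^m$, $q=et+1$ with integers $e\geq 2,t\geq 1$, $R_{e,q}=\mathbb{F}_q[u]/\langle u^e-1\rangle$, and let $\varphi:R_{e,q}^n\to\mathbb{F}_q^{en}$ be the Gray map defined by a matrix $M\in GL_e(\mathbb{F}_q)$ with $MM^T=\gamma I_e$, $\gamma\in\mathbb{F}_q^*$ (see context). For every linear code $\mathcal{C}$ of length $n$ over $R_{e,q}$, $\varphi(\mathcal{C}\cap\mathcal{C}^\perp)=\varphi(\mathcal{C})\cap\varphi(\mathcal{C})^\perp$.
   Context: Write $u^e-1=\prod_{i=1}^e(u-\alpha_i)$ over $\mathbb{F}_q$, $G_i=u-\alpha_i$, $\widehat{G}_i=(u^e-1)/G_i$, $z_iG_i+h_i\widehat{G}_i=1$, $\mu_i=h_i\widehat{G}_i$; these are pairwise orthogonal idempotents summing to $1$, and each $r\in R_{e,q}$ is uniquely $r=\sum_i s_i\mu_i$, $s_i\in\mathbb{F}_q$. The Gray map is $\varphi(r_0,\dots,r_{n-1})=(\boldsymbol{r_0}M,\dots,\boldsymbol{r_{n-1}}M)$ with $\boldsymbol{r_j}=(s_{j,1},\dots,s_{j,e})$ for $r_j=\sum_i s_{j,i}\mu_i$. Duals are Euclidean (over $R_{e,q}$ and over $\mathbb{F}_q$). *)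

theory Defs
  imports "HOL-Computational_Algebra.Polynomial" "HOL-Library.Cardinality"
begin

text \<open>The ring R_{e,q} = F_q[u]/(u^e - 1) is represented by polynomials of degree < e,
  with multiplication reduced modulo u^e - 1.\<close>

definition Upoly :: "nat \<Rightarrow> 'a::field poly" where
  "Upoly e = monom 1 e - 1"

definition Rcarrier :: "nat \<Rightarrow> 'a::field poly set" where
  "Rcarrier e = {r. r = 0 \<or> degree r < e}"

definition Rmult :: "nat \<Rightarrow> 'a::field poly \<Rightarrow> 'a poly \<Rightarrow> 'a poly" where
  "Rmult e a b = (a * b) mod Upoly e"

definition Rvecs :: "nat \<Rightarrow> nat \<Rightarrow> (nat \<Rightarrow> 'a::field poly) set" where
  "Rvecs e n = {x. (\<forall>j<n. x j \<in> Rcarrier e) \<and> (\<forall>j\<ge>n. x j = 0)}"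

definition R_linear_code :: "nat \<Rightarrow> nat \<Rightarrow> (nat \<Rightarrow> 'a::field poly) set \<Rightarrow> bool" where
  "R_linear_code e n C \<longleftrightarrow> C \<subseteq> Rvecs e n \<and> (\<lambda>j. 0) \<in> C \<and>
     (\<forall>x\<in>C. \<forall>y\<in>C. (\<lambda>j. x j + y j) \<in> C) \<and>
     (\<forall>r\<in>Rcarrier e. \<forall>x\<in>C. (\<lambda>j. Rmult e r (x j)) \<in> C)"

definition Rdual :: "nat \<Rightarrow> nat \<Rightarrow> (nat \<Rightarrow> 'a::field poly) set \<Rightarrow> (nat \<Rightarrow> 'a poly) set" where
  "Rdual e n C = {x \<in> Rvecs e n. \<forall>c\<in>C. (\<Sum>j<n. x j * c j) mod Upoly e = 0}"

definition Fvecs :: "nat \<Rightarrow> (nat \<Rightarrow> 'a::field) set" where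
  "Fvecs N = {y. \<forall>k\<ge>N. y k = 0}"

definition Fdual :: "nat \<Rightarrow> (nat \<Rightarrow> 'a::field) set \<Rightarrow> (nat \<Rightarrow> 'a) set" where
  "Fdual N D = {y \<in> Fvecs N. \<forall>d\<in>D. (\<Sum>k<N. y k * d k) = 0}"

text \<open>G_i = u - alpha_i, Ghat_i = (u^e-1)/G_i, h_i with z_i G_i + h_i Ghat_i = 1,
  mu_i = h_i Ghat_i (reduced mod u^e - 1). Indices i range over 0..<e.\<close>
definition Gpoly :: "(nat \<Rightarrow> 'a::field) \<Rightarrow> nat \<Rightarrow> 'a poly" where
  "Gpoly \<alpha> i = [:- \<alpha> i, 1:]"

definition Ghat :: "nat \<Rightarrow> (nat \<Rightarrow> 'a::field) \<Rightarrow> nat \<Rightarrow> 'a poly" where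
  "Ghat e \<alpha> i = Upoly e div Gpoly \<alpha> i"

definition hpoly :: "nat \<Rightarrow> (nat \<Rightarrow> 'a::field) \<Rightarrow> nat \<Rightarrow> 'a poly" where
  "hpoly e \<alpha> i = (SOME h. \<exists>z. z * Gpoly \<alpha> i + h * Ghat e \<alpha> i = 1)"

definition mu :: "nat \<Rightarrow> (nat \<Rightarrow> 'a::field) \<Rightarrow> nat \<Rightarrow> 'a poly" where
  "mu e \<alpha> i = (hpoly e \<alpha> i * Ghat e \<alpha> i) mod Upoly e"

definition coords :: "nat \<Rightarrow> (nat \<Rightarrow> 'a::field) \<Rightarrow> 'a poly \<Rightarrow> nat \<Rightarrow> 'a" where
  "coords e \<alpha> r = (THE s. (\<forall>i\<ge>e. s i = 0) \<and> r = (\<Sum>i<e. smult (s i) (mu e \<alpha> i)))"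

text \<open>Gray map: block j of the image is the row vector coords(r_j) times M.
  Position j*e + k holds entry k of block j.\<close>
definition gray :: "nat \<Rightarrow> (nat \<Rightarrow> 'a::field) \<Rightarrow> (nat \<Rightarrow> nat \<Rightarrow> 'a) \<Rightarrow> nat
                     \<Rightarrow> (nat \<Rightarrow> 'a poly) \<Rightarrow> nat \<Rightarrow> 'a" where
  "gray e \<alpha> M n x = (\<lambda>k. if k < e * n
      then (\<Sum>i<e. coords e \<alpha> (x (k div e)) i * M i (k mod e)) else 0)"

end

theory Submission
  imports Defs
begin

lemma of_nat_card_zero: "of_nat CARD('a::{field,finite}) = (0::'a)"
proof -
  have "(\<Sum>x\<in>UNIV. x + 1) = (\<Sum>x\<in>(\<lambda>x. x+1) ` (UNIV::'a set). x)"
    by (subst sum.reindex) (auto simp: inj_on_def)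
  also have "(\<lambda>x. x+1) ` (UNIV::'a set) = UNIV"
    by (rule surjI[of _ "\<lambda>x. x - 1"]) simp
  finally have "(\<Sum>x\<in>UNIV. x + 1) = (\<Sum>x\<in>(UNIV::'a set). x)" .
  then show ?thesis by (simp add: sum.distrib)
qed

lemma degU: "e \<ge> 1 \<Longrightarrow> degree (Upoly e :: 'a::field poly) = e"
proof -
  assume "e \<ge> 1"
  then have "degree (monom (1::'a) e + (- 1)) = e"
    by (subst degree_add_eq_left) (auto simp: degree_monom_eq)
  then show ?thesis by (simp add: Upoly_def)
qed

lemma poly_Upoly: "poly (Upoly e) a = a ^ e - (1::'a::field)"
  by (simp add: Upoly_def poly_monom)

lemma distinct_roots:
  fixes \<alpha> :: "nat \<Rightarrow> 'a::{field,finite}"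
  assumes card: "CARD('a) = e * t + 1" and e2: "e \<ge> 2"
    and U: "Upoly e = (\<Prod>i<e. Gpoly \<alpha> i)"
  shows "inj_on \<alpha> {..<e}"
proof (rule inj_onI, rule ccontr)
  fix i j assume ij: "i \<in> {..<e}" "j \<in> {..<e}" "\<alpha> i = \<alpha> j" "i \<noteq> j"
  define a where "a = \<alpha> i"
  have "Upoly e = Gpoly \<alpha> i * (\<Prod>k\<in>{..<e}-{i}. Gpoly \<alpha> k)"
    using U ij by (simp add: prod.remove)
  also have "(\<Prod>k\<in>{..<e}-{i}. Gpoly \<alpha> k) = Gpoly \<alpha> j * (\<Prod>k\<in>{..<e}-{i}-{j}. Gpoly \<alpha> k)"
    using ij by (subst prod.remove[of _ j]) auto
  finally have "Upoly e = (Gpoly \<alpha> i * Gpoly \<alpha> j) * (\<Prod>k\<in>{..<e}-{i}-{j}. Gpoly \<alpha> k)"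
    by (simp only: mult.assoc)
  moreover have "Gpoly \<alpha> i * Gpoly \<alpha> j = [:-a,1:]^2"
    using ij by (simp only: Gpoly_def a_def power2_eq_square)
  ultimately have "Upoly e = [:-a,1:]^2 * (\<Prod>k\<in>{..<e}-{i}-{j}. Gpoly \<alpha> k)" by simp
  then have d: "[:-a,1:]^2 dvd Upoly e" by simp
  have U0: "Upoly e \<noteq> (0::'a poly)" proof
    assume "Upoly e = (0::'a poly)"
    moreover have "degree (Upoly e :: 'a poly) = e" by (rule degU) (use e2 in simp)
    ultimately show False using e2 by simp
  qed
  have "poly (Upoly e) a = 0" using d
    by (metis dvd_trans dvd_power poly_eq_0_iff_dvd zero_less_numeral)
  then have ae: "a ^ e = 1" by (simp add: poly_Upoly)
  have a0: "a \<noteq> 0" using ae e2 by (auto simp: power_0_left) 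
  have ne: "of_nat e \<noteq> (0::'a)"
  proof
    assume "of_nat e = (0::'a)"
    then have "of_nat CARD('a) = (1::'a)" using card by simp
    then show False using of_nat_card_zero[where 'a='a] by simp
  qed
  have "poly (pderiv (Upoly e)) a = of_nat e * a ^ (e - 1)"
    by (simp add: Upoly_def pderiv_diff pderiv_monom poly_monom)
  then have "poly (pderiv (Upoly e)) a \<noteq> 0" using ne a0 by simp
  obtain Q where Q: "Upoly e = [:-a,1:]^2 * Q" using d by blast
  have "poly (pderiv ([:-a,1:]^2 * Q)) a = 0"
  proof -
    have h0: "poly [:-a,1:] a = 0" by simp
    show ?thesis by (simp only: power2_eq_square pderiv_mult poly_add poly_mult h0
        mult_zero_left mult_zero_right add_0)
  qed
  then show False using Q \<open>poly (pderiv (Upoly e)) a \<noteq> 0\<close> by simp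
qed
locale grayctx =
  fixes e :: nat and \<alpha> :: "nat \<Rightarrow> 'a::field"
  assumes e2: "e \<ge> 2" and U: "Upoly e = (\<Prod>i<e. Gpoly \<alpha> i)" and inj: "inj_on \<alpha> {..<e}"
begin

lemma degUe: "degree (Upoly e :: 'a poly) = e"
  by (rule degU) (use e2 in simp)

lemma U0: "Upoly e \<noteq> (0::'a poly)"
  using degUe e2 by (metis degree_0 not_numeral_le_zero)

lemma poly_U_root: "i < e \<Longrightarrow> poly (Upoly e) (\<alpha> i) = 0"
  unfolding U by (auto simp: poly_prod Gpoly_def intro!: prod_zero)

lemma poly_mod_U: "i < e \<Longrightarrow> poly (f mod Upoly e) (\<alpha> i) = poly f (\<alpha> i)"
proof -
  assume i: "i < e"
  have "f = f div Upoly e * Upoly e + f mod Upoly e" by simp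
  then have "poly f (\<alpha> i) = poly (f div Upoly e) (\<alpha> i) * poly (Upoly e) (\<alpha> i) + poly (f mod Upoly e) (\<alpha> i)"
    by (metis poly_add poly_mult)
  then show ?thesis using poly_U_root[OF i] by simp
qed

lemma vanish:
  assumes "degree f < e" and "\<And>i. i < e \<Longrightarrow> poly f (\<alpha> i) = 0"
  shows "f = 0"
proof (rule ccontr)
  assume f: "f \<noteq> 0"
  have sub: "\<alpha> ` {..<e} \<subseteq> {x. poly f x = 0}" using assms(2) by auto
  have "card (\<alpha> ` {..<e}) = e" using inj by (simp add: card_image)
  moreover have "card (\<alpha> ` {..<e}) \<le> card {x. poly f x = 0}"
    using sub poly_roots_finite[OF f] by (rule card_mono[rotated])
  ultimately have "e \<le> degree f" using card_poly_roots_bound[OF f] by simp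
  then show False using assms(1) by simp
qed

lemma Ghat_eq: "i < e \<Longrightarrow> Ghat e \<alpha> i = (\<Prod>k\<in>{..<e}-{i}. Gpoly \<alpha> k)"
proof -
  assume i: "i < e"
  have "Upoly e = Gpoly \<alpha> i * (\<Prod>k\<in>{..<e}-{i}. Gpoly \<alpha> k)"
    using U i by (simp add: prod.remove)
  moreover have "Gpoly \<alpha> i \<noteq> 0" by (simp add: Gpoly_def)
  ultimately show ?thesis unfolding Ghat_def by simp
qed

lemma poly_Ghat: "i < e \<Longrightarrow> l < e \<Longrightarrow> poly (Ghat e \<alpha> i) (\<alpha> l) = 0 \<longleftrightarrow> l \<noteq> i"
proof -
  assume i: "i < e" and l: "l < e"
  have "poly (Ghat e \<alpha> i) (\<alpha> l) = (\<Prod>k\<in>{..<e}-{i}. \<alpha> l - \<alpha> k)"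
    using i by (simp add: Ghat_eq poly_prod Gpoly_def)
  also have "\<dots> = 0 \<longleftrightarrow> (\<exists>k\<in>{..<e}-{i}. \<alpha> l = \<alpha> k)" by simp
  also have "\<dots> \<longleftrightarrow> l \<noteq> i" using inj i l by (auto simp: inj_on_def)
  finally show ?thesis .
qed

lemma hpoly_prop: "i < e \<Longrightarrow> \<exists>z. z * Gpoly \<alpha> i + hpoly e \<alpha> i * Ghat e \<alpha> i = 1"
proof -
  assume i: "i < e"
  define c where "c = poly (Ghat e \<alpha> i) (\<alpha> i)"
  have c: "c \<noteq> 0" using poly_Ghat[OF i i] by (simp add: c_def)
  define h where "h = [:inverse c:]"
  have hz: "poly (1 - h * Ghat e \<alpha> i) (\<alpha> i) = 0" using c by (simp add: h_def c_def)
  then have "Gpoly \<alpha> i dvd (1 - h * Ghat e \<alpha> i)" by (metis Gpoly_def poly_eq_0_iff_dvd)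
  then obtain z where "1 - h * Ghat e \<alpha> i = Gpoly \<alpha> i * z" by blast
  then have "\<exists>z. z * Gpoly \<alpha> i + h * Ghat e \<alpha> i = 1" by (intro exI[of _ z]) (simp add: algebra_simps)
  then have "\<exists>h. \<exists>z. z * Gpoly \<alpha> i + h * Ghat e \<alpha> i = 1" by blast
  then show ?thesis unfolding hpoly_def by (rule someI_ex)
qed

lemma poly_mu: "i < e \<Longrightarrow> l < e \<Longrightarrow> poly (mu e \<alpha> i) (\<alpha> l) = (if i = l then 1 else 0)"
proof -
  assume i: "i < e" and l: "l < e"
  obtain z where z: "z * Gpoly \<alpha> i + hpoly e \<alpha> i * Ghat e \<alpha> i = 1" using hpoly_prop[OF i] by blast
  have "poly (mu e \<alpha> i) (\<alpha> l) = poly (hpoly e \<alpha> i) (\<alpha> l) * poly (Ghat e \<alpha> i) (\<alpha> l)"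
    unfolding mu_def using l by (simp add: poly_mod_U)
  also have "\<dots> = (if i = l then 1 else 0)"
  proof (cases "i = l")
    case True
    have "poly (z * Gpoly \<alpha> i + hpoly e \<alpha> i * Ghat e \<alpha> i) (\<alpha> i) = 1" using z by simp
    then show ?thesis using True by (simp add: Gpoly_def)
  next
    case False
    then show ?thesis using poly_Ghat[OF i l] by simp
  qed
  finally show ?thesis .
qed

lemma mu_carrier: "mu e \<alpha> i \<in> Rcarrier e"
  unfolding mu_def Rcarrier_def using degree_mod_less[OF U0] degUe by auto

lemma Rmult_carrier: "Rmult e a b \<in> Rcarrier e" for a b :: "'a poly"
  unfolding Rmult_def Rcarrier_def using degree_mod_less[OF U0, of "a*b"] degUe by auto

lemma poly_Rmult: "l < e \<Longrightarrow> poly (Rmult e a b) (\<alpha> l) = poly a (\<alpha> l) * poly b (\<alpha> l)"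
  unfolding Rmult_def by (simp add: poly_mod_U)

lemma coords_eq:
  assumes r: "r \<in> Rcarrier e"
  shows "coords e \<alpha> r = (\<lambda>i. if i < e then poly r (\<alpha> i) else 0)"
  unfolding coords_def
proof (rule the1_equality)
  let ?s = "\<lambda>i. if i < e then poly r (\<alpha> i) else 0"
  have ev: "poly (\<Sum>i<e. smult (s i) (mu e \<alpha> i)) (\<alpha> l) = s l" if "l < e" for s l
  proof -
    have "poly (\<Sum>i<e. smult (s i) (mu e \<alpha> i)) (\<alpha> l) = (\<Sum>i<e. s i * (if i = l then 1 else 0))"
      using that by (simp add: poly_sum poly_mu)
    also have "\<dots> = s l" using that by (simp add: if_distrib sum.delta cong: if_cong)
    finally show ?thesis .
  qed
  have deg: "degree (r - (\<Sum>i<e. smult (?s i) (mu e \<alpha> i))) < e"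
  proof (rule degree_diff_less)
    show "degree r < e" using r e2 unfolding Rcarrier_def by auto
    show "degree (\<Sum>i<e. smult (?s i) (mu e \<alpha> i)) < e"
    proof (rule degree_sum_less)
      show "0 < e" using e2 by simp
      fix i show "degree (smult (?s i) (mu e \<alpha> i)) < e"
      proof -
        have "degree (mu e \<alpha> i) < e" using mu_carrier[of i] e2 unfolding Rcarrier_def by auto
        then show ?thesis using degree_smult_le[of "?s i" "mu e \<alpha> i"] by linarith
      qed
    qed
  qed
  have "r - (\<Sum>i<e. smult (?s i) (mu e \<alpha> i)) = 0"
    by (rule vanish[OF deg]) (simp add: ev)
  then show "(\<forall>i\<ge>e. ?s i = 0) \<and> r = (\<Sum>i<e. smult (?s i) (mu e \<alpha> i))" by simp
  show "\<exists>!s. (\<forall>i\<ge>e. s i = 0) \<and> r = (\<Sum>i<e. smult (s i) (mu e \<alpha> i))"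
  proof (rule ex_ex1I)
    show "\<exists>s. (\<forall>i\<ge>e. s i = 0) \<and> r = (\<Sum>i<e. smult (s i) (mu e \<alpha> i))"
      using \<open>r - _ = 0\<close> by (intro exI[of _ ?s]) simp
    fix s1 s2 assume s1: "(\<forall>i\<ge>e. s1 i = 0) \<and> r = (\<Sum>i<e. smult (s1 i) (mu e \<alpha> i))"
      and s2: "(\<forall>i\<ge>e. s2 i = 0) \<and> r = (\<Sum>i<e. smult (s2 i) (mu e \<alpha> i))"
    show "s1 = s2"
    proof
      fix i show "s1 i = s2 i"
      proof (cases "i < e")
        case True
        then show ?thesis using ev[OF True, of s1] ev[OF True, of s2] s1 s2 by metis
      next
        case False then show ?thesis using s1 s2 by simp
      qed
    qed
  qed
qed

end

lemma sum_blocks: "(\<Sum>k<e*n. (f::nat \<Rightarrow> 'a::comm_monoid_add) k) = (\<Sum>j<n. \<Sum>k<e. f (j*e+k))"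
proof -
  have "(\<Sum>k<e*n. f k) = (\<Sum>j<n. sum f {j*e..<j*e+e})"
    using sum.nat_group[of f e n] by (simp add: mult.commute)
  also have "\<dots> = (\<Sum>j<n. \<Sum>k<e. f (j*e+k))"
  proof (rule sum.cong[OF refl])
    fix j
    have "sum f {j*e..<j*e+e} = sum f ((\<lambda>k. j*e+k) ` {..<e})"
      by (simp add: lessThan_atLeast0 image_add_atLeastLessThan add.commute)
    also have "\<dots> = (\<Sum>k<e. f (j*e+k))" by (subst sum.reindex) (auto simp: inj_on_def)
    finally show "sum f {j*e..<j*e+e} = (\<Sum>k<e. f (j*e+k))" .
  qed
  finally show ?thesis .
qed

lemma ortho_sum:
  fixes M :: "nat \<Rightarrow> nat \<Rightarrow> 'a::field"
  assumes orth: "\<forall>i<e. \<forall>k<e. (\<Sum>l<e. M i l * M k l) = (if i = k then \<gamma> else 0)"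
  shows "(\<Sum>k<e. (\<Sum>i<e. a i * M i k) * (\<Sum>l<e. b l * M l k)) = \<gamma> * (\<Sum>i<e. a i * b i)"
proof -
  have "(\<Sum>k<e. (\<Sum>i<e. a i * M i k) * (\<Sum>l<e. b l * M l k))
      = (\<Sum>k<e. \<Sum>i<e. \<Sum>l<e. a i * b l * (M i k * M l k))"
    unfolding sum_product by (simp only: mult_ac)
  also have "\<dots> = (\<Sum>i<e. \<Sum>k<e. \<Sum>l<e. a i * b l * (M i k * M l k))"
    by (rule sum.swap)
  also have "\<dots> = (\<Sum>i<e. \<Sum>l<e. \<Sum>k<e. a i * b l * (M i k * M l k))"
    by (rule sum.cong[OF refl], rule sum.swap)
  also have "\<dots> = (\<Sum>i<e. \<Sum>l<e. a i * b l * (\<Sum>k<e. M i k * M l k))"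
    by (simp only: sum_distrib_left)
  also have "\<dots> = (\<Sum>i<e. \<Sum>l<e. a i * b l * (if i = l then \<gamma> else 0))"
    using orth by (intro sum.cong refl) auto
  also have "\<dots> = (\<Sum>i<e. a i * b i * \<gamma>)"
    by (simp add: if_distrib sum.delta cong: if_cong)
  also have "\<dots> = \<gamma> * (\<Sum>i<e. a i * b i)" by (simp add: sum_distrib_left mult.commute)
  finally show ?thesis .
qed

context grayctx
begin

lemma gray_eq:
  assumes x: "x \<in> Rvecs e n"
  shows "gray e \<alpha> M n x = (\<lambda>k. if k < e*n then \<Sum>i<e. poly (x (k div e)) (\<alpha> i) * M i (k mod e) else 0)"
proof
  fix k show "gray e \<alpha> M n x k = (if k < e*n then \<Sum>i<e. poly (x (k div e)) (\<alpha> i) * M i (k mod e) else 0)"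
  proof (cases "k < e*n")
    case True
    then have "k div e < n" by (simp add: less_mult_imp_div_less mult.commute)
    then have "x (k div e) \<in> Rcarrier e" using x unfolding Rvecs_def by auto
    then show ?thesis using True by (simp add: gray_def coords_eq)
  qed (simp add: gray_def)
qed

lemma gray_inner:
  assumes orth: "\<forall>i<e. \<forall>k<e. (\<Sum>l<e. M i l * M k l) = (if i = k then \<gamma> else 0)"
    and x: "x \<in> Rvecs e n" and c: "c \<in> Rvecs e n"
  shows "(\<Sum>k<e*n. gray e \<alpha> M n x k * gray e \<alpha> M n c k)
       = \<gamma> * (\<Sum>i<e. poly (\<Sum>j<n. x j * c j) (\<alpha> i))"
proof -
  have "(\<Sum>k<e*n. gray e \<alpha> M n x k * gray e \<alpha> M n c k)
     = (\<Sum>j<n. \<Sum>k<e. gray e \<alpha> M n x (j*e+k) * gray e \<alpha> M n c (j*e+k))"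
    by (rule sum_blocks)
  also have "\<dots> = (\<Sum>j<n. \<Sum>k<e. (\<Sum>i<e. poly (x j) (\<alpha> i) * M i k) * (\<Sum>l<e. poly (c j) (\<alpha> l) * M l k))"
  proof (intro sum.cong refl)
    fix j k assume j: "j \<in> {..<n}" and k: "k \<in> {..<e}"
    have lt: "j*e+k < e*n"
    proof -
      have "j*e+k < j*e+e" using k by simp
      also have "\<dots> = (j+1)*e" by simp
      also have "\<dots> \<le> n*e" using j by (intro mult_right_mono) auto
      finally show ?thesis by (simp add: mult.commute)
    qed
    have dm: "(j*e+k) div e = j" "(j*e+k) mod e = k" using k by auto
    show "gray e \<alpha> M n x (j*e+k) * gray e \<alpha> M n c (j*e+k) =
        (\<Sum>i<e. poly (x j) (\<alpha> i) * M i k) * (\<Sum>l<e. poly (c j) (\<alpha> l) * M l k)"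
      using lt dm by (simp add: gray_eq[OF x] gray_eq[OF c])
  qed
  also have "\<dots> = (\<Sum>j<n. \<gamma> * (\<Sum>i<e. poly (x j) (\<alpha> i) * poly (c j) (\<alpha> i)))"
    by (simp add: ortho_sum[OF orth])
  also have "\<dots> = \<gamma> * (\<Sum>j<n. \<Sum>i<e. poly (x j) (\<alpha> i) * poly (c j) (\<alpha> i))"
    by (simp only: sum_distrib_left)
  also have "\<dots> = \<gamma> * (\<Sum>i<e. \<Sum>j<n. poly (x j) (\<alpha> i) * poly (c j) (\<alpha> i))"
    by (rule arg_cong[where f="\<lambda>z. \<gamma> * z"], rule sum.swap)
  also have "\<dots> = \<gamma> * (\<Sum>i<e. poly (\<Sum>j<n. x j * c j) (\<alpha> i))"
    by (simp only: poly_sum poly_mult)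
  finally show ?thesis .
qed

end

theorem lemma4p7:
  fixes p m e t n :: nat and \<gamma> :: "'a::{field,finite}"
    and \<alpha> :: "nat \<Rightarrow> 'a" and M :: "nat \<Rightarrow> nat \<Rightarrow> 'a"
    and C :: "(nat \<Rightarrow> 'a poly) set"
  assumes "prime p" and "odd p" and "CARD('a) = p ^ m"
    and "CARD('a) = e * t + 1" and "e \<ge> 2" and "t \<ge> 1"
    and "Upoly e = (\<Prod>i<e. Gpoly \<alpha> i)"
    and "\<exists>N. (\<forall>i<e. \<forall>k<e. (\<Sum>l<e. N i l * M l k) = (if i = k then 1 else 0)) \<and>
             (\<forall>i<e. \<forall>k<e. (\<Sum>l<e. M i l * N l k) = (if i = k then 1 else 0))"
    and "\<gamma> \<noteq> 0"
    and "\<forall>i<e. \<forall>k<e. (\<Sum>l<e. M i l * M k l) = (if i = k then \<gamma> else 0)"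
    and "R_linear_code e n C"
  shows "gray e \<alpha> M n ` (C \<inter> Rdual e n C)
           = gray e \<alpha> M n ` C \<inter> Fdual (e * n) (gray e \<alpha> M n ` C)"
proof -
  note orth = assms(10)
  have inj: "inj_on \<alpha> {..<e}" by (rule distinct_roots[OF assms(4) assms(5) assms(7)])
  interpret grayctx e \<alpha> using assms(5) assms(7) inj by unfold_locales
  have Csub: "C \<subseteq> Rvecs e n" and Cmul: "\<And>r x. r \<in> Rcarrier e \<Longrightarrow> x \<in> C \<Longrightarrow> (\<lambda>j. Rmult e r (x j)) \<in> C"
  proof -
    have lc: "C \<subseteq> Rvecs e n \<and> (\<lambda>j. 0) \<in> C \<and>
     (\<forall>x\<in>C. \<forall>y\<in>C. (\<lambda>j. x j + y j) \<in> C) \<and>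
     (\<forall>r\<in>Rcarrier e. \<forall>x\<in>C. (\<lambda>j. Rmult e r (x j)) \<in> C)"
      using assms(11) unfolding R_linear_code_def .
    show "C \<subseteq> Rvecs e n" using lc by (rule conjunct1)
    have h: "\<forall>r\<in>Rcarrier e. \<forall>x\<in>C. (\<lambda>j. Rmult e r (x j)) \<in> C"
      by (rule conjunct2[OF conjunct2[OF conjunct2[OF lc]]])
    fix r :: "'a poly" and x assume r: "r \<in> Rcarrier e" and x: "x \<in> C"
    show "(\<lambda>j. Rmult e r (x j)) \<in> C" by (rule bspec[OF bspec[OF h r] x])
  qed
  have Fv: "gray e \<alpha> M n x \<in> Fvecs (e*n)" for x
    unfolding Fvecs_def gray_def by simp
  show ?thesis
  proof
    show "gray e \<alpha> M n ` (C \<inter> Rdual e n C) \<subseteq> gray e \<alpha> M n ` C \<inter> Fdual (e * n) (gray e \<alpha> M n ` C)"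
    proof (rule subsetI)
      fix y assume "y \<in> gray e \<alpha> M n ` (C \<inter> Rdual e n C)"
      then obtain x where x: "x \<in> C" "x \<in> Rdual e n C" and y: "y = gray e \<alpha> M n x" by auto
      have "y \<in> Fdual (e * n) (gray e \<alpha> M n ` C)"
        unfolding Fdual_def
      proof (intro CollectI conjI ballI)
        show "y \<in> Fvecs (e*n)" using y Fv by simp
        fix d assume "d \<in> gray e \<alpha> M n ` C"
        then obtain c where c: "c \<in> C" and d: "d = gray e \<alpha> M n c" by auto
        have md: "(\<Sum>j<n. x j * c j) mod Upoly e = 0" using x(2) c unfolding Rdual_def by auto
        have rt: "poly (\<Sum>j<n. x j * c j) (\<alpha> i) = 0" if i: "i < e" for i
        proof -
          have "poly ((\<Sum>j<n. x j * c j) mod Upoly e) (\<alpha> i) = 0" by (simp only: md poly_0)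
          then show ?thesis by (simp only: poly_mod_U[OF i])
        qed
        have xv: "x \<in> Rvecs e n" and cv: "c \<in> Rvecs e n" using x(1) c Csub by auto
        have "(\<Sum>k<e * n. y k * d k) = \<gamma> * (\<Sum>i<e. poly (\<Sum>j<n. x j * c j) (\<alpha> i))"
          unfolding y d by (rule gray_inner[OF orth xv cv])
        also have "\<dots> = 0" using rt by simp
        finally show "(\<Sum>k<e * n. y k * d k) = 0" .
      qed
      then show "y \<in> gray e \<alpha> M n ` C \<inter> Fdual (e * n) (gray e \<alpha> M n ` C)"
        using x y by auto
    qed
  next
    show "gray e \<alpha> M n ` C \<inter> Fdual (e * n) (gray e \<alpha> M n ` C) \<subseteq> gray e \<alpha> M n ` (C \<inter> Rdual e n C)"
    proof (rule subsetI)
      fix y assume yin: "y \<in> gray e \<alpha> M n ` C \<inter> Fdual (e * n) (gray e \<alpha> M n ` C)"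
      then obtain x where x: "x \<in> C" and y: "y = gray e \<alpha> M n x" by auto
      have orthy: "\<And>c. c \<in> C \<Longrightarrow> (\<Sum>k<e * n. y k * gray e \<alpha> M n c k) = 0"
        using yin unfolding Fdual_def by auto
      have xv: "x \<in> Rvecs e n" using x Csub by auto
      have "x \<in> Rdual e n C"
        unfolding Rdual_def
      proof (intro CollectI conjI ballI xv)
        fix c assume c: "c \<in> C"
        define P where "P = (\<Sum>j<n. x j * c j)"
        have root: "poly P (\<alpha> i) = 0" if i: "i < e" for i
        proof -
          define c' where "c' = (\<lambda>j. Rmult e (mu e \<alpha> i) (c j))"
          have c': "c' \<in> C" unfolding c'_def by (rule Cmul[OF mu_carrier c])
          have pl: "poly (\<Sum>j<n. x j * c' j) (\<alpha> l) = (if i = l then poly P (\<alpha> l) else 0)"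
            if l: "l < e" for l
            using l i by (simp add: c'_def P_def poly_sum poly_Rmult poly_mu)
          have c'v: "c' \<in> Rvecs e n" using c' Csub by auto
          have "0 = (\<Sum>k<e * n. y k * gray e \<alpha> M n c' k)" using orthy[OF c'] by simp
          also have "\<dots> = \<gamma> * (\<Sum>l<e. poly (\<Sum>j<n. x j * c' j) (\<alpha> l))"
            unfolding y by (rule gray_inner[OF orth xv c'v])
          also have "\<dots> = \<gamma> * poly P (\<alpha> i)"
            using i by (simp add: pl if_distrib sum.delta cong: if_cong)
          finally show ?thesis using assms(9) by simp
        qed
        show "(\<Sum>j<n. x j * c j) mod Upoly e = 0"
        proof (rule vanish)
          show "degree ((\<Sum>j<n. x j * c j) mod Upoly e) < e"
            using degree_mod_less[OF U0, of "\<Sum>j<n. x j * c j"] degUe e2 by auto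
          fix i assume "i < e"
          then show "poly ((\<Sum>j<n. x j * c j) mod Upoly e) (\<alpha> i) = 0"
            using root[of i] poly_mod_U[of i] by (simp add: P_def)
        qed
      qed
      then show "y \<in> gray e \<alpha> M n ` (C \<inter> Rdual e n C)" using x y by auto
    qed
  qed
qed

end
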